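(* Let $k\geq 2$ and let $a,b$ be positive integers with $a\geq k-1$ and $b\geq a-k+3$. Then the rooted $k$-hypergraph $\mathcal{T}=\mathcal{T}(a,b,k)$ (defined in the context) is balanced: for every nonempty set $S$ of non-root vertices of $\mathcal{T}$, $\frac{\epsilon(S)}{|S|}\geq \frac{b}{a}$, where $\epsilon(S)$ is the number of edges of $\mathcal{T}$ containing at least one vertex of $S$ (note $b/a=\epsilon(U-R)/|U-R|$ where $U-R$ is the set of all non-roots).
   Context: The rooted $k$-hypergraph $\mathcal{T}(a,b,k)$: its non-root vertices are $v_1,\dots,v_a$ (in this order); for $1\leq j\leq a-k+1$, $\{v_j,\dots,v_{j+k-1}\}$ is an edge. For $1\leq j\leq a-k+2$, call $\{v_j,\dots,v_{j+k-2}\}$ the $j$-th $(k-1)$-set. Its roots are $\rho_1,\dots,\rho_{b-a+k-1}$ (set $R$), and for each $i$ there is an edge consisting of $\rho_i$ together with the $m_i$-th $(k-1)$-set, where $m_i=\left\lfloor 1+\frac{(i-1)(a-k+2)}{b-a+k-2}\right\rfloor$ for $1\leq i\leq b-a+k-2$ and $m_{b-a+k-1}=a-k+2$. These are all the edges, so $\mathcal{T}$ has exactly $b$ edges. A rooted $k$-hypergraph with vertex set $U$ and root set $R$ is balanced if every nonempty $S\subseteq U-R$ satisfies $\epsilon(S)/|S|\geq \epsilon(U-R)/|U-R|$. *)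

theory Defs
  imports Complex_Main
begin

text \<open>Vertices of the rooted hypergraph T(a,b,k): non-roots V j (j = 1..a) and roots Rt i.\<close>
datatype vert = V nat | Rt nat

definition kset :: "nat \<Rightarrow> nat \<Rightarrow> vert set" where
  "kset k j = V ` {j..<j+k-1}"

text \<open>Number of roots: b - a + k - 1 (written to avoid truncated subtraction).\<close>
definition nroots :: "nat \<Rightarrow> nat \<Rightarrow> nat \<Rightarrow> nat" where
  "nroots a b k = b + k - a - 1"

definition mroot :: "nat \<Rightarrow> nat \<Rightarrow> nat \<Rightarrow> nat \<Rightarrow> nat" where
  "mroot a b k i = (if i = nroots a b k then a + 2 - k
                    else 1 + ((i - 1) * (a + 2 - k)) div (b + k - a - 2))"

definition edgesT :: "nat \<Rightarrow> nat \<Rightarrow> nat \<Rightarrow> vert set set" where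
  "edgesT a b k =
     {V ` {j..<j+k} | j. 1 \<le> j \<and> j \<le> a + 1 - k}
   \<union> {insert (Rt i) (kset k (mroot a b k i)) | i. 1 \<le> i \<and> i \<le> nroots a b k}"

definition eps :: "vert set set \<Rightarrow> vert set \<Rightarrow> nat" where
  "eps E S = card {e \<in> E. e \<inter> S \<noteq> {}}"

end

theory Submission
  imports Defs
begin

lemma G_count:
  fixes C :: "nat set" and N x y :: nat
  assumes "finite C" "N > 0" "\<And>t. t \<in> C \<Longrightarrow> x \<le> t * N \<and> t * N < y" "C \<noteq> {}"
  shows "card C * N + x < y + N"
proof -
  define mi where "mi = Min C"
  define ma where "ma = Max C"
  have mi: "mi \<in> C" "ma \<in> C" using assms mi_def ma_def by auto
  have sub: "C \<subseteq> {mi..ma}" using assms mi_def ma_def by auto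
  have "card C \<le> card {mi..ma}" using sub by (intro card_mono) auto
  hence c: "card C \<le> ma - mi + 1" by simp
  have le: "mi \<le> ma" using sub mi by auto
  have "x \<le> mi * N" "ma * N < y" using assms(3) mi by auto
  moreover have "(ma - mi) * N + mi * N = ma * N" using le
    by (metis add_mult_distrib le_add_diff_inverse2)
  moreover have "card C * N \<le> (ma - mi + 1) * N" using c by (intro mult_right_mono) auto
  ultimately show ?thesis by (simp add: add_mult_distrib)
qed

lemma win_split:
  fixes T :: "nat set"
  assumes "{s..<e} \<subseteq> T" "x \<notin> T"
  shows "{s..<e} \<subseteq> {t\<in>T. t < x} \<or> {s..<e} \<subseteq> {t\<in>T. x < t}"
proof (cases "s < x")
  case True
  have "\<forall>w\<in>{s..<e}. w < x"
  proof
    fix w assume w: "w \<in> {s..<e}"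
    show "w < x"
    proof (rule ccontr)
      assume "\<not> w < x"
      hence "x \<in> {s..<e}" using w True by auto
      thus False using assms by auto
    qed
  qed
  then show ?thesis using assms by auto
next
  case False
  have "\<forall>w\<in>{s..<e}. x < w"
  proof
    fix w assume w: "w \<in> {s..<e}"
    hence "w \<in> T" using assms by auto
    hence "w \<noteq> x" using assms by auto
    thus "x < w" using w False by auto
  qed
  then show ?thesis using assms by auto
qed

lemma card_split:
  fixes W :: "nat \<Rightarrow> nat set" and J :: "nat set"
  assumes "finite J" "\<And>j. \<exists>s e. W j = {s..<e}" "x \<notin> T"
  shows "card {j\<in>J. W j \<subseteq> T} \<le> card {j\<in>J. W j \<subseteq> {t\<in>T. t < x}} + card {j\<in>J. W j \<subseteq> {t\<in>T. x < t}}"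
proof -
  have "{j\<in>J. W j \<subseteq> T} \<subseteq> {j\<in>J. W j \<subseteq> {t\<in>T. t < x}} \<union> {j\<in>J. W j \<subseteq> {t\<in>T. x < t}}"
  proof
    fix j assume "j \<in> {j\<in>J. W j \<subseteq> T}"
    moreover obtain s e where "W j = {s..<e}" using assms(2) by blast
    ultimately show "j \<in> {j\<in>J. W j \<subseteq> {t\<in>T. t < x}} \<union> {j\<in>J. W j \<subseteq> {t\<in>T. x < t}}"
      using win_split[of s e T x] assms(3) by auto
  qed
  hence "card {j\<in>J. W j \<subseteq> T} \<le> card ({j\<in>J. W j \<subseteq> {t\<in>T. t < x}} \<union> {j\<in>J. W j \<subseteq> {t\<in>T. x < t}})"
    using assms(1) by (intro card_mono) auto
  also have "\<dots> \<le> card {j\<in>J. W j \<subseteq> {t\<in>T. t < x}} + card {j\<in>J. W j \<subseteq> {t\<in>T. x < t}}" by (rule card_Un_le)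
  finally show ?thesis .
qed

lemma ar2: fixes N K L q c :: nat
  assumes "N > 0" "L \<le> N" "c*N \<le> L*q"
  shows "(N+K)*(L+c) \<le> (N+q)*(L+K)"
proof -
  have "N*((N+K)*(L+c)) = (N+K)*(N*L + c*N)" by (simp add: algebra_simps)
  also have "\<dots> \<le> (N+K)*(N*L + L*q)" using assms(3) by (intro mult_left_mono) auto
  also have "\<dots> = ((N+K)*L)*(N+q)" by (simp add: algebra_simps)
  also have "\<dots> \<le> (N*(L+K))*(N+q)"
  proof (intro mult_right_mono)
    have "K*L \<le> K*N" using assms(2) by (intro mult_left_mono) auto
    thus "(N+K)*L \<le> N*(L+K)" by (simp add: algebra_simps)
  qed auto
  also have "\<dots> = N*((N+q)*(L+K))" by (simp add: algebra_simps)
  finally show ?thesis using assms(1) by simp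
qed
lemma ar1: fixes N K M q c :: nat
  assumes "N > 0" "M + 1 \<le> N" "c*N < (M+1)*q + N"
  shows "(N+K)*(M+c) \<le> (N+q)*(M+1+K)"
proof -
  have "N*((N+K)*(M+c)) + (N+K) = (N+K)*(N*M + c*N + 1)" by (simp add: algebra_simps)
  also have "\<dots> \<le> (N+K)*((M+1)*(N+q))" using assms(3) by (intro mult_left_mono) (auto simp: algebra_simps)
  also have "\<dots> = ((N+K)*(M+1))*(N+q)" by (simp add: algebra_simps)
  also have "\<dots> \<le> (N*(M+1+K))*(N+q)"
  proof (intro mult_right_mono)
    have "K*(M+1) \<le> K*N" using assms(2) by (intro mult_left_mono) auto
    thus "(N+K)*(M+1) \<le> N*(M+1+K)" by (simp add: algebra_simps)
  qed auto
  also have "\<dots> = N*((N+q)*(M+1+K))" by (simp add: algebra_simps)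
  finally have "N*((N+K)*(M+c)) + (N+K) \<le> N*((N+q)*(M+1+K))" .
  hence "N*((N+K)*(M+c)) \<le> N*((N+q)*(M+1+K))" by linarith
  thus ?thesis using assms(1) by (simp only: mult_le_cancel1)
qed

lemma win_sub_iff:
  fixes j k l h :: nat
  assumes "k > 0"
  shows "({j..<j+k} \<subseteq> {l..h}) = (l \<le> j \<and> j + k \<le> h + 1)"
proof
  assume A: "{j..<j+k} \<subseteq> {l..h}"
  have "j \<in> {j..<j+k}" "j + k - 1 \<in> {j..<j+k}" using assms by auto
  thus "l \<le> j \<and> j + k \<le> h + 1" using A assms by fastforce
qed auto

definition miss :: "nat \<Rightarrow> nat \<Rightarrow> nat \<Rightarrow> nat set \<Rightarrow> nat" where
  "miss a b k T = card {j\<in>{1..a+1-k}. {j..<j+k} \<subseteq> T}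
     + card {i\<in>{1..nroots a b k}. {mroot a b k i..<mroot a b k i + k - 1} \<subseteq> T}"

lemma interval_bound:
  fixes a b k l h :: nat
  assumes k: "k \<ge> 2" and ak: "a + 1 \<ge> k" and bk: "b + k \<ge> a + 3"
    and lh: "1 \<le> l" "l \<le> h" "h \<le> a" and nf: "\<not> (l = 1 \<and> h = a)"
  shows "a * miss a b k {l..h} \<le> b * (h + 1 - l)"
proof -
  define N where "N = a + 2 - k"
  define q where "q = b + k - a - 2"
  define K where "K = k - 2"
  have aN: "a = N + K" and bN: "b = N + q" and N0: "N > 0" and q0: "q > 0"
    using k ak bk unfolding N_def q_def K_def by auto
  have nr: "nroots a b k = q + 1" unfolding nroots_def q_def using bk by simp
  have P: "{j\<in>{1..a+1-k}. {j..<j+k} \<subseteq> {l..h}} = {l..h+1-k}"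
    using k lh by (auto simp: win_sub_iff)
  have Pc: "card {j\<in>{1..a+1-k}. {j..<j+k} \<subseteq> {l..h}} = h + 2 - k - l"
    unfolding P using lh by simp
  define C where "C = {t. t < q \<and> (l-1)*q \<le> t*N \<and> t*N < (h+2-k)*q}"
  have finC: "finite C" unfolding C_def by simp
  have Rsub: "{i\<in>{1..nroots a b k}. {mroot a b k i..<mroot a b k i + k - 1} \<subseteq> {l..h}}
      \<subseteq> Suc ` C \<union> (if h = a \<and> l \<le> N then {q+1} else {})"
  proof
    fix i assume i: "i \<in> {i\<in>{1..nroots a b k}. {mroot a b k i..<mroot a b k i + k - 1} \<subseteq> {l..h}}"
    define m where "m = mroot a b k i"
    have "{m..<m + (k - 1)} \<subseteq> {l..h}" using i k unfolding m_def by auto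
    hence "l \<le> m \<and> m + (k - 1) \<le> h + 1" using k by (subst (asm) win_sub_iff) auto
    hence w: "l \<le> m" "m + k - 2 \<le> h" using k by auto
    show "i \<in> Suc ` C \<union> (if h = a \<and> l \<le> N then {q+1} else {})"
    proof (cases "i = q + 1")
      case True
      hence "m = N" unfolding m_def mroot_def N_def nr by simp
      thus ?thesis using w True aN lh K_def k by auto
    next
      case False
      then obtain t where t: "i = Suc t" "t < q" using i nr by (cases i) auto
      have mt: "m = 1 + t * N div q" using t False unfolding m_def mroot_def nr N_def q_def by simp
      have "l - 1 \<le> t * N div q" using w mt by linarith
      hence "(l - 1) * q \<le> t * N div q * q" by (intro mult_right_mono) auto
      also have "\<dots> \<le> t * N" by simp
      finally have c1: "(l - 1) * q \<le> t * N" .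
      have "t * N div q < h + 2 - k" using w mt k by linarith
      hence c2: "t * N < (h + 2 - k) * q" using q0 by (simp add: div_less_iff_less_mult)
      show ?thesis using t c1 c2 unfolding C_def by auto
    qed
  qed
  have Rc: "card {i\<in>{1..nroots a b k}. {mroot a b k i..<mroot a b k i + k - 1} \<subseteq> {l..h}}
      \<le> card C + (if h = a \<and> l \<le> N then 1 else 0)"
  proof -
    have "card {i\<in>{1..nroots a b k}. {mroot a b k i..<mroot a b k i + k - 1} \<subseteq> {l..h}}
       \<le> card (Suc ` C \<union> (if h = a \<and> l \<le> N then {q+1} else {}))"
      using Rsub finC by (intro card_mono) auto
    also have "\<dots> \<le> card (Suc ` C) + card (if h = a \<and> l \<le> N then {q+1} else {})"
      by (rule card_Un_le)
    also have "\<dots> = card C + (if h = a \<and> l \<le> N then 1 else 0)"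
      by (simp add: card_image)
    finally show ?thesis .
  qed
  have mb: "miss a b k {l..h} \<le> (h + 2 - k - l) + card C + (if h = a \<and> l \<le> N then 1 else 0)"
    unfolding miss_def using Pc Rc by simp
  show ?thesis
  proof (cases "h < a")
    case True
    hence last0: "(if h = a \<and> l \<le> N then 1 else 0) = (0::nat)" by simp
    show ?thesis
    proof (cases "h + 2 - k \<le> l - 1")
      case True
      have "C = {}"
      proof (rule ccontr)
        assume "C \<noteq> {}"
        then obtain t where "t \<in> C" by auto
        hence "(l-1)*q \<le> t*N" "t*N < (h+2-k)*q" unfolding C_def by auto
        hence "(l-1)*q < (h+2-k)*q" by (rule le_less_trans)
        hence "l - 1 < h + 2 - k" by simp
        thus False using True by simp
      qed
      hence "miss a b k {l..h} = 0" using mb last0 True by simp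
      thus ?thesis by simp
    next
      case False
      define M where "M = h + 2 - k - l"
      have M1: "M + 1 = h + 2 - k - (l - 1)" using False lh unfolding M_def by linarith
      have hq: "(h+2-k)*q = (l-1)*q + (M+1)*q" using False M1 by (simp add: add_mult_distrib[symmetric])
      have cb: "card C * N < (M+1)*q + N"
      proof (cases "C = {}")
        case True thus ?thesis using N0 by simp
      next
        case False
        have "card C * N + (l-1)*q < (h+2-k)*q + N"
          by (rule G_count[OF finC N0 _ False]) (auto simp: C_def)
        thus ?thesis using hq by linarith
      qed
      have MN: "M + 1 \<le> N" using M1 lh unfolding N_def by linarith
      have "(N+K)*(M + card C) \<le> (N+q)*(M+1+K)" by (rule ar1[OF N0 MN cb])
      moreover have "M + 1 + K = h + 1 - l" using M1 False k lh unfolding K_def by linarith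
      moreover have "miss a b k {l..h} \<le> M + card C" using mb last0 unfolding M_def by simp
      ultimately show ?thesis using aN bN
        by (metis mult_le_mono2 order_trans)
    qed
  next
    case False
    hence ha: "h = a" using lh by simp
    hence l2: "l \<ge> 2" using nf lh by auto
    have cb': "card C * N + (l-1)*q \<le> q * N" if ne: "C \<noteq> {}"
    proof -
      have "card C * N + (l-1)*q < ((q-1)*N + 1) + N"
      proof (rule G_count[OF finC N0 _ ne])
        fix t assume t: "t \<in> C"
        hence "t \<le> q - 1" unfolding C_def by auto
        hence "t * N \<le> (q-1)*N" by (rule mult_right_mono) simp
        moreover have "(l-1)*q \<le> t*N" using t unfolding C_def by auto
        ultimately show "(l-1)*q \<le> t*N \<and> t*N < (q-1)*N + 1" by linarith
      qed
      moreover have "(q-1)*N + N = q*N" using q0 by (metis Suc_diff_1 mult_Suc add.commute)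
      ultimately show ?thesis by linarith
    qed
    have cb: "card C * N + (l-1)*q \<le> q * N" if lN: "l \<le> N"
    proof (cases "C = {}")
      case True
      have "l - 1 \<le> N" using lN by simp
      hence "(l-1)*q \<le> q*N" by (simp add: mult.commute)
      thus ?thesis using True by simp
    next
      case False thus ?thesis by (rule cb')
    qed
    show ?thesis
    proof (cases "l \<le> N")
      case True
      define L where "L = N + 1 - l"
      have LN: "L \<le> N" unfolding L_def using l2 by simp
      have "(l-1)*q + L*q = N*q" using True l2 unfolding L_def by (simp add: add_mult_distrib[symmetric])
      hence cL: "card C * N \<le> L * q" using cb[OF True] by (simp add: mult.commute)
      have "(N+K)*(L + card C) \<le> (N+q)*(L+K)" by (rule ar2[OF N0 LN cL])
      moreover have "L + K = h + 1 - l" using ha aN True unfolding L_def by linarith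
      moreover have "miss a b k {l..h} \<le> L + card C" using mb ha True l2 aN k unfolding L_def K_def by simp
      ultimately show ?thesis using aN bN
        by (metis mult_le_mono2 order_trans)
    next
      case False
      have "N * q \<le> (l-1)*q" using False by (intro mult_right_mono) auto
      have "card C = 0"
      proof (rule ccontr)
        assume c0: "card C \<noteq> 0"
        hence "C \<noteq> {}" by auto
        hence "card C * N + (l-1)*q \<le> q * N" by (rule cb')
        hence "card C * N = 0" using \<open>N * q \<le> (l-1)*q\<close> by (simp only: mult.commute[of N q])
        thus False using N0 c0 by simp
      qed
      moreover have "h + 2 - k - l = 0" using False ha unfolding N_def by simp
      ultimately have "miss a b k {l..h} = 0" using mb False by simp
      thus ?thesis by simp
    qed
  qed
qed


lemma miss_split:
  fixes T :: "nat set"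
  assumes "x \<notin> T"
  shows "miss a b k T \<le> miss a b k {t\<in>T. t < x} + miss a b k {t\<in>T. x < t}"
proof -
  have 1: "card {j\<in>{1..a+1-k}. {j..<j+k} \<subseteq> T} \<le> card {j\<in>{1..a+1-k}. {j..<j+k} \<subseteq> {t\<in>T. t < x}} + card {j\<in>{1..a+1-k}. {j..<j+k} \<subseteq> {t\<in>T. x < t}}"
    by (rule card_split[where W = "\<lambda>j. {j..<j+k}"]) (use assms in auto)
  have 2: "card {i\<in>{1..nroots a b k}. {mroot a b k i..<mroot a b k i + k - 1} \<subseteq> T} \<le> card {i\<in>{1..nroots a b k}. {mroot a b k i..<mroot a b k i + k - 1} \<subseteq> {t\<in>T. t < x}} + card {i\<in>{1..nroots a b k}. {mroot a b k i..<mroot a b k i + k - 1} \<subseteq> {t\<in>T. x < t}}"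
    by (rule card_split[where W = "\<lambda>i. {mroot a b k i..<mroot a b k i + k - 1}"]) (use assms in auto)
  show ?thesis unfolding miss_def using 1 2 by simp
qed

lemma miss_bound:
  fixes a b k :: nat
  assumes k: "k \<ge> 2" and ak: "a + 1 \<ge> k" and bk: "b + k \<ge> a + 3"
  shows "T \<subseteq> {1..a} \<Longrightarrow> T \<noteq> {1..a} \<Longrightarrow> a * miss a b k T \<le> b * card T"
proof (induction "card T" arbitrary: T rule: less_induct)
  case less
  have finT: "finite T" using less.prems finite_subset by blast
  show ?case
  proof (cases "T = {}")
    case True
    have "miss a b k T = 0" unfolding miss_def True using k by auto
    thus ?thesis by simp
  next
    case ne: False
    show ?thesis
    proof (cases "\<exists>x y z. x \<notin> T \<and> y \<in> T \<and> z \<in> T \<and> y < x \<and> x < z")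
      case True
      then obtain x y z where xyz: "x \<notin> T" "y \<in> T" "z \<in> T" "y < x" "x < z" by blast
      define T1 where "T1 = {t\<in>T. t < x}"
      define T2 where "T2 = {t\<in>T. x < t}"
      have s1: "T1 \<subseteq> T" "T2 \<subseteq> T" unfolding T1_def T2_def by auto
      have "z \<notin> T1" "y \<notin> T2" using xyz unfolding T1_def T2_def by auto
      hence c1: "card T1 < card T" and c2: "card T2 < card T" using xyz finT s1
        by (metis psubset_card_mono psubsetI)+
      have nf: "T1 \<noteq> {1..a}" "T2 \<noteq> {1..a}" using less.prems s1 by auto
      have i1: "a * miss a b k T1 \<le> b * card T1" using less.hyps[OF c1] s1 less.prems nf by auto
      have i2: "a * miss a b k T2 \<le> b * card T2" using less.hyps[OF c2] s1 less.prems nf by auto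
      have "T = T1 \<union> T2" using xyz unfolding T1_def T2_def by (auto simp: not_less le_less)
      moreover have "T1 \<inter> T2 = {}" unfolding T1_def T2_def by auto
      ultimately have cT: "card T = card T1 + card T2" using finT
        by (metis card_Un_disjoint finite_Un)
      have "miss a b k T \<le> miss a b k T1 + miss a b k T2"
        unfolding T1_def T2_def by (rule miss_split[OF xyz(1)])
      hence "a * miss a b k T \<le> a * miss a b k T1 + a * miss a b k T2"
        by (metis add_mult_distrib2 mult_le_mono2)
      also have "\<dots> \<le> b * card T" using i1 i2 cT by (simp add: add_mult_distrib2)
      finally show ?thesis .
    next
      case False
      define l where "l = Min T"
      define h where "h = Max T"
      have lT: "l \<in> T" "h \<in> T" using finT ne l_def h_def by auto
      have TI: "T = {l..h}"
      proof
        show "T \<subseteq> {l..h}" using finT l_def h_def by auto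
        show "{l..h} \<subseteq> T"
        proof
          fix x assume x: "x \<in> {l..h}"
          show "x \<in> T"
          proof (rule ccontr)
            assume "x \<notin> T"
            moreover have "l < x" "x < h" using x lT \<open>x \<notin> T\<close> by (auto simp: le_less)
            ultimately show False using False lT by blast
          qed
        qed
      qed
      have lh: "1 \<le> l" "l \<le> h" "h \<le> a" using lT less.prems TI by auto
      have nf: "\<not> (l = 1 \<and> h = a)" using less.prems TI by auto
      have "a * miss a b k {l..h} \<le> b * (h + 1 - l)" by (rule interval_bound[OF k ak bk lh nf])
      thus ?thesis using TI by simp
    qed
  qed
qed


lemma card_part:
  fixes W :: "nat \<Rightarrow> nat set"
  assumes "finite J" "\<And>j. j \<in> J \<Longrightarrow> W j \<subseteq> U"
  shows "card {j\<in>J. W j \<inter> A \<noteq> {}} + card {j\<in>J. W j \<subseteq> U - A} = card J"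
proof -
  have e: "{j\<in>J. W j \<subseteq> U - A} = {j\<in>J. \<not> (W j \<inter> A \<noteq> {})}" using assms(2) by auto
  have "card {j\<in>J. W j \<inter> A \<noteq> {}} + card {j\<in>J. \<not> (W j \<inter> A \<noteq> {})} = card ({j\<in>J. W j \<inter> A \<noteq> {}} \<union> {j\<in>J. \<not> (W j \<inter> A \<noteq> {})})"
    using assms(1) by (intro card_Un_disjoint[symmetric]) auto
  also have "{j\<in>J. W j \<inter> A \<noteq> {}} \<union> {j\<in>J. \<not> (W j \<inter> A \<noteq> {})} = J" by auto
  finally show ?thesis unfolding e .
qed

lemma mroot_bounds:
  assumes k: "k \<ge> 2" and ak: "a + 1 \<ge> k" and bk: "b + k \<ge> a + 3"
    and i: "1 \<le> i" "i \<le> nroots a b k"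
  shows "1 \<le> mroot a b k i \<and> mroot a b k i + k - 2 \<le> a"
proof (cases "i = nroots a b k")
  case True
  thus ?thesis unfolding mroot_def using k ak by auto
next
  case False
  define N where "N = a + 2 - k"
  define q where "q = b + k - a - 2"
  have q0: "q > 0" using bk unfolding q_def by simp
  have "i - 1 < q" using i False bk unfolding nroots_def q_def by auto
  moreover have N0: "N > 0" using ak unfolding N_def by simp
  ultimately have "(i - 1) * N < q * N" by (intro mult_strict_right_mono)
  hence "(i - 1) * N div q < N" using q0 by (simp add: div_less_iff_less_mult)
  hence "mroot a b k i \<le> N" unfolding mroot_def using False N_def q_def by simp
  thus ?thesis unfolding mroot_def N_def using k ak False by auto
qed

theorem lemma3:
  fixes a b k :: nat and S :: "vert set"
  assumes "k \<ge> 2" "a > 0" "b > 0" "a \<ge> k - 1" "b + k \<ge> a + 3"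
    and "S \<subseteq> V ` {1..a}" and "S \<noteq> {}"
  shows "real (eps (edgesT a b k) S) / real (card S) \<ge> real b / real a"
proof -
  have k: "k \<ge> 2" and ak: "a + 1 \<ge> k" and bk: "b + k \<ge> a + 3" using assms by auto
  define A where "A = {n. V n \<in> S}"
  have SA: "S = V ` A" using assms(6) unfolding A_def by auto
  have A1: "A \<subseteq> {1..a}" using assms(6) unfolding A_def by auto
  have cSA: "card S = card A" unfolding SA by (rule card_image) (simp add: inj_on_def)
  have Ane: "A \<noteq> {}" using assms(7) SA by auto
  define J where "J = {1..a+1-k}"
  define I where "I = {1..nroots a b k}"
  define X where "X = (\<lambda>j. V ` {j..<j+k})"
  define Y where "Y = (\<lambda>i. insert (Rt i) (V ` {mroot a b k i..<mroot a b k i + k - 1}))"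
  have E: "edgesT a b k = X ` J \<union> Y ` I"
    unfolding edgesT_def X_def Y_def J_def I_def kset_def by auto
  have hitX: "X j \<inter> S \<noteq> {} \<longleftrightarrow> {j..<j+k} \<inter> A \<noteq> {}" for j
    unfolding X_def A_def by auto
  have hitY: "Y i \<inter> S \<noteq> {} \<longleftrightarrow> {mroot a b k i..<mroot a b k i + k - 1} \<inter> A \<noteq> {}" for i
    unfolding Y_def A_def using assms(6) by auto
  define J' where "J' = {j\<in>J. {j..<j+k} \<inter> A \<noteq> {}}"
  define I' where "I' = {i\<in>I. {mroot a b k i..<mroot a b k i + k - 1} \<inter> A \<noteq> {}}"
  have F: "{e \<in> edgesT a b k. e \<inter> S \<noteq> {}} = X ` J' \<union> Y ` I'"
  proof -
    have "{e \<in> edgesT a b k. e \<inter> S \<noteq> {}} = X ` {j\<in>J. X j \<inter> S \<noteq> {}} \<union> Y ` {i\<in>I. Y i \<inter> S \<noteq> {}}"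
      unfolding E by blast
    thus ?thesis unfolding J'_def I'_def hitX hitY .
  qed
  have injX: "inj_on X J'"
  proof
    fix j j' assume "j \<in> J'" "j' \<in> J'" "X j = X j'"
    hence "{j..<j+k} = {j'..<j'+k}" unfolding X_def by (simp add: inj_image_eq_iff inj_on_def)
    thus "j = j'" using k by (simp add: atLeastLessThan_eq_iff)
  qed
  have injY: "inj_on Y I'"
  proof
    fix i i' assume "i \<in> I'" "i' \<in> I'" "Y i = Y i'"
    hence "Rt i \<in> Y i'" unfolding Y_def by auto
    thus "i = i'" unfolding Y_def by auto
  qed
  have disj: "X ` J' \<inter> Y ` I' = {}" unfolding X_def Y_def by auto
  have epsv: "eps (edgesT a b k) S = card J' + card I'"
    unfolding eps_def F
    using card_Un_disjoint[OF _ _ disj] card_image[OF injX] card_image[OF injY]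
    unfolding J'_def I'_def J_def I_def by simp
  define T where "T = {1..a} - A"
  have TS: "T \<subseteq> {1..a}" "T \<noteq> {1..a}" using A1 Ane unfolding T_def by auto
  have cT: "card A + card T = a"
  proof -
    have "card ({1..a} - A) = a - card A" using A1 by (simp add: card_Diff_subset finite_subset)
    moreover have "card A \<le> a" using card_mono[OF _ A1] by simp
    ultimately show ?thesis unfolding T_def by simp
  qed
  have pJ: "card J' + card {j\<in>J. {j..<j+k} \<subseteq> T} = card J"
    unfolding J'_def T_def by (rule card_part) (auto simp: J_def)
  have pI: "card I' + card {i\<in>I. {mroot a b k i..<mroot a b k i + k - 1} \<subseteq> T} = card I"
    unfolding I'_def T_def
  proof (rule card_part)
    show "finite I" unfolding I_def by simp
    fix i assume "i \<in> I"
    hence "1 \<le> mroot a b k i \<and> mroot a b k i + k - 2 \<le> a"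
      using mroot_bounds[OF k ak bk] unfolding I_def by auto
    thus "{mroot a b k i..<mroot a b k i + k - 1} \<subseteq> {1..a}" by auto
  qed
  have cJI: "card J + card I = b" unfolding J_def I_def nroots_def using ak bk by simp
  have mT: "miss a b k T = card {j\<in>J. {j..<j+k} \<subseteq> T} + card {i\<in>I. {mroot a b k i..<mroot a b k i + k - 1} \<subseteq> T}"
    unfolding miss_def J_def I_def ..
  have ev: "eps (edgesT a b k) S + miss a b k T = b" using epsv mT pJ pI cJI by simp
  have mb: "a * miss a b k T \<le> b * card T" by (rule miss_bound[OF k ak bk TS])
  have key: "b * card A \<le> a * eps (edgesT a b k) S"
  proof -
    have "b * card A + b * card T = a * eps (edgesT a b k) S + a * miss a b k T"
      using ev cT by (metis add_mult_distrib2 mult.commute)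
    thus ?thesis using mb by linarith
  qed
  have cpos: "card S > 0" using cSA Ane A1 by (simp add: card_gt_0_iff finite_subset)
  have "real b * real (card S) \<le> real a * real (eps (edgesT a b k) S)"
    using key cSA by (metis of_nat_le_iff of_nat_mult)
  thus ?thesis using cpos assms(2) by (simp add: divide_simps mult.commute)
qed

end
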